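(* Let $\Phi:\{0,1\}^n\to\{0,1\}^n$, let $\mu\in\{0,1\}^n$ be a fixed point of $\Phi$, and let $\rho\in P_n$. Then $\overline{W}(\mu)=\overline{W}[\Phi^\rho(\mu,\cdot)]=\overline{W}[\omega_\rho(\mu)]$ and $\underline{W}(\mu)=\underline{W}[\Phi^\rho(\mu,\cdot)]=\underline{W}[\omega_\rho(\mu)]$.
   Context: Let $\mathbf{B}=\{0,1\}$ (discrete topology), $n\ge1$, $\Phi:\mathbf{B}^n\to\mathbf{B}^n$. For $\nu\in\mathbf{B}^n$: $\Phi^\nu_i(\mu)=\mu_i$ if $\nu_i=0$, $=\Phi_i(\mu)$ if $\nu_i=1$; $\Phi^{\alpha^0\dots\alpha^k}=\Phi^{\alpha^k}\circ\cdots\circ\Phi^{\alpha^0}$. A sequence $(\alpha^k)_{k\in\mathbf{N}}$ in $\mathbf{B}^n$ is progressive if each $\{k:\alpha^k_i=1\}$ is infinite. $Seq$ = strictly increasing real sequences unbounded above. $P_n$ = functions $\rho:\mathbf{R}\to\mathbf{B}^n$ with $\rho(t_k)=\alpha^k$, $\rho(t)=0$ for $t\notin\{t_k\}$, $\alpha$ progressive, $(t_k)\in Seq$. Orbit: $\Phi^\rho(\mu,t)=\mu$ for $t<t_0$, $=\Phi^{\alpha^0\dots\alpha^k}(\mu)$ for $t\in[t_k,t_{k+1})$. $\omega_\rho(\mu)=\{\mu':\exists(s_k)\in Seq,\ \Phi^\rho(\mu,s_k)=\mu'$ for all large $k\}$. $\overline{W}(\mu)=\{\mu':\exists\rho'\in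 P_n,\ \omega_{\rho'}(\mu')\subset\{\mu\}\}$, $\underline{W}(\mu)=\{\mu':\forall\rho'\in P_n,\ \omega_{\rho'}(\mu')\subset\{\mu\}\}$. Basins: $\overline{W}[\Phi^\rho(\mu,\cdot)]=\{\mu':\exists\rho'\in P_n,\exists t',\forall t\ge t',\ \Phi^{\rho'}(\mu',t)=\Phi^\rho(\mu,t)\}$, $\underline{W}[\Phi^\rho(\mu,\cdot)]=\{\mu':\forall\rho'\in P_n,\exists t',\forall t\ge t',\ \Phi^{\rho'}(\mu',t)=\Phi^\rho(\mu,t)\}$, $\overline{W}[\omega_\rho(\mu)]=\{\mu':\exists\rho'\in P_n,\ \omega_{\rho'}(\mu')=\omega_\rho(\mu)\}$, $\underline{W}[\omega_\rho(\mu)]=\{\mu':\forall\rho'\in P_n,\ \omega_{\rho'}(\mu')=\omega_\rho(\mu)\}$. *)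

theory Defs
  imports Main "HOL-Library.Infinite_Set" Complex_Main
begin

text \<open>B^n is modelled as 'n \<Rightarrow> bool for a finite nonempty index type 'n (n = CARD('n) \<ge> 1).
  The zero vector is (\<lambda>_. False).\<close>

definition phi_nu :: "(('n \<Rightarrow> bool) \<Rightarrow> ('n \<Rightarrow> bool)) \<Rightarrow> ('n \<Rightarrow> bool) \<Rightarrow> ('n \<Rightarrow> bool) \<Rightarrow> ('n \<Rightarrow> bool)" where
  "phi_nu \<Phi> \<nu> \<mu> = (\<lambda>i. if \<nu> i then \<Phi> \<mu> i else \<mu> i)"

primrec phi_seq :: "(('n \<Rightarrow> bool) \<Rightarrow> ('n \<Rightarrow> bool)) \<Rightarrow> (nat \<Rightarrow> 'n \<Rightarrow> bool) \<Rightarrow> nat \<Rightarrow> ('n \<Rightarrow> bool) \<Rightarrow> ('n \<Rightarrow> bool)" where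
  "phi_seq \<Phi> \<alpha> 0 \<mu> = phi_nu \<Phi> (\<alpha> 0) \<mu>"
| "phi_seq \<Phi> \<alpha> (Suc k) \<mu> = phi_nu \<Phi> (\<alpha> (Suc k)) (phi_seq \<Phi> \<alpha> k \<mu>)"

definition progressive :: "(nat \<Rightarrow> 'n \<Rightarrow> bool) \<Rightarrow> bool" where
  "progressive \<alpha> \<longleftrightarrow> (\<forall>i. infinite {k. \<alpha> k i})"

definition Seq :: "(nat \<Rightarrow> real) set" where
  "Seq = {t. strict_mono t \<and> (\<forall>M. \<exists>k. t k > M)}"

definition is_rep :: "(real \<Rightarrow> 'n \<Rightarrow> bool) \<Rightarrow> (nat \<Rightarrow> 'n \<Rightarrow> bool) \<Rightarrow> (nat \<Rightarrow> real) \<Rightarrow> bool" where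
  "is_rep \<rho> \<alpha> t \<longleftrightarrow> progressive \<alpha> \<and> t \<in> Seq \<and> (\<forall>k. \<rho> (t k) = \<alpha> k)
      \<and> (\<forall>s. s \<notin> range t \<longrightarrow> \<rho> s = (\<lambda>_. False))"

definition Pn :: "(real \<Rightarrow> 'n \<Rightarrow> bool) set" where
  "Pn = {\<rho>. \<exists>\<alpha> t. is_rep \<rho> \<alpha> t}"

definition orbit_rep :: "(('n \<Rightarrow> bool) \<Rightarrow> ('n \<Rightarrow> bool)) \<Rightarrow> (nat \<Rightarrow> 'n \<Rightarrow> bool) \<Rightarrow> (nat \<Rightarrow> real) \<Rightarrow> ('n \<Rightarrow> bool) \<Rightarrow> real \<Rightarrow> ('n \<Rightarrow> bool)" where
  "orbit_rep \<Phi> \<alpha> t \<mu> s = (if s < t 0 then \<mu> else phi_seq \<Phi> \<alpha> (GREATEST k. t k \<le> s) \<mu>)"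

text \<open>The orbit \<Phi>^\<rho>(\<mu>, s); it does not depend on the chosen representation of \<rho> \<in> Pn.\<close>
definition orbit :: "(('n \<Rightarrow> bool) \<Rightarrow> ('n \<Rightarrow> bool)) \<Rightarrow> (real \<Rightarrow> 'n \<Rightarrow> bool) \<Rightarrow> ('n \<Rightarrow> bool) \<Rightarrow> real \<Rightarrow> ('n \<Rightarrow> bool)" where
  "orbit \<Phi> \<rho> \<mu> s = (let (\<alpha>, t) = (SOME p. is_rep \<rho> (fst p) (snd p)) in orbit_rep \<Phi> \<alpha> t \<mu> s)"

definition omega :: "(('n \<Rightarrow> bool) \<Rightarrow> ('n \<Rightarrow> bool)) \<Rightarrow> (real \<Rightarrow> 'n \<Rightarrow> bool) \<Rightarrow> ('n \<Rightarrow> bool) \<Rightarrow> ('n \<Rightarrow> bool) set" where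
  "omega \<Phi> \<rho> \<mu> = {\<mu>'. \<exists>s \<in> Seq. \<exists>K. \<forall>k\<ge>K. orbit \<Phi> \<rho> \<mu> (s k) = \<mu>'}"

definition W_up :: "(('n \<Rightarrow> bool) \<Rightarrow> ('n \<Rightarrow> bool)) \<Rightarrow> ('n \<Rightarrow> bool) \<Rightarrow> ('n \<Rightarrow> bool) set" where
  "W_up \<Phi> \<mu> = {\<mu>'. \<exists>\<rho>' \<in> Pn. omega \<Phi> \<rho>' \<mu>' \<subseteq> {\<mu>}}"

definition W_low :: "(('n \<Rightarrow> bool) \<Rightarrow> ('n \<Rightarrow> bool)) \<Rightarrow> ('n \<Rightarrow> bool) \<Rightarrow> ('n \<Rightarrow> bool) set" where
  "W_low \<Phi> \<mu> = {\<mu>'. \<forall>\<rho>' \<in> Pn. omega \<Phi> \<rho>' \<mu>' \<subseteq> {\<mu>}}"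

definition W_up_orbit :: "(('n \<Rightarrow> bool) \<Rightarrow> ('n \<Rightarrow> bool)) \<Rightarrow> (real \<Rightarrow> 'n \<Rightarrow> bool) \<Rightarrow> ('n \<Rightarrow> bool) \<Rightarrow> ('n \<Rightarrow> bool) set" where
  "W_up_orbit \<Phi> \<rho> \<mu> = {\<mu>'. \<exists>\<rho>' \<in> Pn. \<exists>t'. \<forall>t\<ge>t'. orbit \<Phi> \<rho>' \<mu>' t = orbit \<Phi> \<rho> \<mu> t}"

definition W_low_orbit :: "(('n \<Rightarrow> bool) \<Rightarrow> ('n \<Rightarrow> bool)) \<Rightarrow> (real \<Rightarrow> 'n \<Rightarrow> bool) \<Rightarrow> ('n \<Rightarrow> bool) \<Rightarrow> ('n \<Rightarrow> bool) set" where
  "W_low_orbit \<Phi> \<rho> \<mu> = {\<mu>'. \<forall>\<rho>' \<in> Pn. \<exists>t'. \<forall>t\<ge>t'. orbit \<Phi> \<rho>' \<mu>' t = orbit \<Phi> \<rho> \<mu> t}"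

definition W_up_omega :: "(('n \<Rightarrow> bool) \<Rightarrow> ('n \<Rightarrow> bool)) \<Rightarrow> (real \<Rightarrow> 'n \<Rightarrow> bool) \<Rightarrow> ('n \<Rightarrow> bool) \<Rightarrow> ('n \<Rightarrow> bool) set" where
  "W_up_omega \<Phi> \<rho> \<mu> = {\<mu>'. \<exists>\<rho>' \<in> Pn. omega \<Phi> \<rho>' \<mu>' = omega \<Phi> \<rho> \<mu>}"

definition W_low_omega :: "(('n \<Rightarrow> bool) \<Rightarrow> ('n \<Rightarrow> bool)) \<Rightarrow> (real \<Rightarrow> 'n \<Rightarrow> bool) \<Rightarrow> ('n \<Rightarrow> bool) \<Rightarrow> ('n \<Rightarrow> bool) set" where
  "W_low_omega \<Phi> \<rho> \<mu> = {\<mu>'. \<forall>\<rho>' \<in> Pn. omega \<Phi> \<rho>' \<mu>' = omega \<Phi> \<rho> \<mu>}"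

end

theory Submission
  imports Defs
begin

definition OmF :: "(real \<Rightarrow> 'a) \<Rightarrow> 'a set" where
  "OmF f = {x. \<exists>s \<in> Seq. \<exists>K. \<forall>k\<ge>K. f (s k) = x}"

lemma OmF_iff: "x \<in> OmF f \<longleftrightarrow> (\<forall>M. \<exists>t>M. f t = x)"
proof
  assume "x \<in> OmF f"
  then obtain s K where s: "s \<in> Seq" and K: "\<forall>k\<ge>K. f (s k) = x"
    unfolding OmF_def by blast
  show "\<forall>M. \<exists>t>M. f t = x"
  proof
    fix M
    from s obtain k where "s k > M" and sm: "strict_mono s" unfolding Seq_def by blast
    moreover have "s k \<le> s (max k K)" using sm by (simp add: strict_mono_less_eq)
    ultimately show "\<exists>t>M. f t = x" using K by (intro exI[of _ "s (max k K)"]) auto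
  qed
next
  assume H: "\<forall>M. \<exists>t>M. f t = x"
  define g where "g M = (SOME t. t > M \<and> f t = x)" for M
  have g: "g M > M \<and> f (g M) = x" for M
    unfolding g_def using someI_ex[OF H[rule_format, of M]] by blast
  define s where "s = rec_nat (g 0) (\<lambda>k sk. g (max sk (real (Suc k))))"
  have s0: "s 0 = g 0" and sS: "s (Suc k) = g (max (s k) (real (Suc k)))" for k
    by (simp_all add: s_def)
  have fs: "f (s k) = x" for k by (cases k) (simp_all add: s0 sS g)
  have sk: "s k > real k" for k
  proof (cases k)
    case 0 then show ?thesis using g[of 0] s0 by simp
  next
    case (Suc m) then show ?thesis using g[of "max (s m) (real (Suc m))"] sS[of m] by simp
  qed
  have "strict_mono s"
    unfolding strict_mono_Suc_iff using sS g by (metis max.strict_boundedE)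
  moreover have "\<exists>k. s k > M" for M
  proof -
    have "real (nat \<lceil>M\<rceil>) \<ge> M" by linarith
    then show ?thesis using sk[of "nat \<lceil>M\<rceil>"] by (intro exI[of _ "nat \<lceil>M\<rceil>"]) linarith
  qed
  ultimately have "s \<in> Seq" unfolding Seq_def by blast
  then show "x \<in> OmF f" unfolding OmF_def using fs by blast
qed

lemma OmF_sub: "OmF (f :: real \<Rightarrow> 'a::finite) \<subseteq> {x} \<longleftrightarrow> (\<exists>T. \<forall>t\<ge>T. f t = x)"
proof
  assume H: "OmF f \<subseteq> {x}"
  have "\<forall>y. \<exists>M. y \<noteq> x \<longrightarrow> (\<forall>t>M. f t \<noteq> y)"
  proof
    fix y
    show "\<exists>M. y \<noteq> x \<longrightarrow> (\<forall>t>M. f t \<noteq> y)"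
    proof (cases "y = x")
      case False
      then have "y \<notin> OmF f" using H by blast
      then show ?thesis unfolding OmF_iff by blast
    qed simp
  qed
  then obtain Mf where Mf: "\<And>y. y \<noteq> x \<Longrightarrow> \<forall>t>Mf y. f t \<noteq> y" by metis
  define T where "T = Max (range Mf) + 1"
  have "Mf y < T" for y
  proof -
    have "finite (range Mf)" by simp
    then have "Mf y \<le> Max (range Mf)" by (rule Max_ge) simp
    then show ?thesis unfolding T_def by linarith
  qed
  then have "\<forall>t\<ge>T. f t = x"
  proof (intro allI impI)
    fix t assume lt: "\<And>y. Mf y < T" and "T \<le> t"
    then have "t > Mf (f t)" using lt[of "f t"] by linarith
    then show "f t = x" using Mf[of "f t"] by blast
  qed
  then show "\<exists>T. \<forall>t\<ge>T. f t = x" by blast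
next
  assume "\<exists>T. \<forall>t\<ge>T. f t = x"
  then obtain T where T: "\<forall>t\<ge>T. f t = x" by blast
  show "OmF f \<subseteq> {x}"
  proof
    fix y assume "y \<in> OmF f"
    then obtain t where "t > T" "f t = y" unfolding OmF_iff by blast
    then show "y \<in> {x}" using T by auto
  qed
qed

lemma OmF_eq: "OmF (f :: real \<Rightarrow> 'a::finite) = {x} \<longleftrightarrow> (\<exists>T. \<forall>t\<ge>T. f t = x)"
proof
  assume "\<exists>T. \<forall>t\<ge>T. f t = x"
  then obtain T where T: "\<forall>t\<ge>T. f t = x" by blast
  have "x \<in> OmF f" unfolding OmF_iff
  proof
    fix M show "\<exists>t>M. f t = x" using T by (intro exI[of _ "max M T + 1"]) auto
  qed
  then show "OmF f = {x}" using OmF_sub T by blast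
qed (use OmF_sub in blast)

lemma omega_OmF: "omega \<Phi> \<rho> \<mu> = OmF (orbit \<Phi> \<rho> \<mu>)"
  unfolding omega_def OmF_def by simp

lemma phi_seq_fix: "\<Phi> \<mu> = \<mu> \<Longrightarrow> phi_seq \<Phi> \<alpha> k \<mu> = \<mu>"
  by (induction k) (simp_all add: phi_nu_def)

lemma orbit_fix: "\<Phi> \<mu> = \<mu> \<Longrightarrow> orbit \<Phi> \<rho> \<mu> s = \<mu>"
  unfolding orbit_def orbit_rep_def by (simp add: phi_seq_fix split: prod.split)

theorem theorem53:
  fixes \<Phi> :: "('n::finite \<Rightarrow> bool) \<Rightarrow> ('n \<Rightarrow> bool)"
    and \<mu> :: "'n \<Rightarrow> bool"
    and \<rho> :: "real \<Rightarrow> 'n \<Rightarrow> bool"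
  assumes "\<Phi> \<mu> = \<mu>"
    and "\<rho> \<in> Pn"
  shows "W_up \<Phi> \<mu> = W_up_orbit \<Phi> \<rho> \<mu> \<and> W_up_orbit \<Phi> \<rho> \<mu> = W_up_omega \<Phi> \<rho> \<mu>
       \<and> W_low \<Phi> \<mu> = W_low_orbit \<Phi> \<rho> \<mu> \<and> W_low_orbit \<Phi> \<rho> \<mu> = W_low_omega \<Phi> \<rho> \<mu>"
proof -
  have orb: "orbit \<Phi> \<rho> \<mu> t = \<mu>" for t by (rule orbit_fix[where \<Phi>=\<Phi> and \<mu>=\<mu>, OF assms(1)])
  have om: "omega \<Phi> \<rho> \<mu> = {\<mu>}" unfolding omega_OmF OmF_eq using orb by blast
  have e1: "omega \<Phi> \<rho>' \<mu>' \<subseteq> {\<mu>} \<longleftrightarrow> (\<exists>T. \<forall>t\<ge>T. orbit \<Phi> \<rho>' \<mu>' t = \<mu>)" for \<rho>' \<mu>'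
    unfolding omega_OmF by (rule OmF_sub)
  have e2: "omega \<Phi> \<rho>' \<mu>' = omega \<Phi> \<rho> \<mu> \<longleftrightarrow> (\<exists>T. \<forall>t\<ge>T. orbit \<Phi> \<rho>' \<mu>' t = \<mu>)" for \<rho>' \<mu>'
    unfolding om unfolding omega_OmF by (rule OmF_eq)
  show ?thesis
    unfolding W_up_def W_up_orbit_def W_up_omega_def W_low_def W_low_orbit_def W_low_omega_def
      e1 e2 orb by simp
qed

end
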